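(* For every integer $m\ge2$ and every $\alpha\in[0,1]$, every deterministic Condorcet consistent social choice rule on $m$ candidates has distortion at least $3-\frac{4(3+\alpha)}{m+2+m\alpha}$ on $\alpha$-decisive metric spaces. The same lower bound applies to selecting an arbitrary candidate from the matching uncovered set.
   Context: An election: voters $V=\{1,\dots,n\}$, a fixed finite set $C$ of $m$ candidates, a profile of linear orders $\sigma_i$ over $C$; $a\succeq_i c$ means $a=c$ or $i$ ranks $a$ above $c$; $\mathrm{top}(i)$ is $i$'s first choice. A distance function $d$ on $V\cup C$ is nonnegative, symmetric and satisfies the triangle inequality (co-location allowed); consistent with $\sigma$ if $d(i,c)\le d(i,c')$ whenever $i$ ranks $c$ above $c'$; $\alpha$-decisive if $d(i,\mathrm{top}(i))\le\alpha\,d(i,c)$ for all $i$ and $c\ne\mathrm{top}(i)$. $\mathrm{SC}(c)=\sum_i d(i,c)$. Distortion of a deterministic rule $f$ on $\alpha$-decisive spaces: $\sup_\sigma\sup_d\mathrm{SC}(f(\sigma))/\min_c\mathrm{SC}(c)$ over $\alpha$-decisive consistent $d$ (for "selecting an arbitrary candidate from a set", the worst choice in the set is taken). A Condorcet winner is a candidate $a$ such that for every other candidate $b$, at least $n/2$ voters prefer $a$ to $b$; a deterministic rule is Condorcet consistent if it outputs a Condorcet winner whenever one exists. The separation graph $G(a,b)$ has both sides copies of $V$ and edge $(i,j)$ iff some $c$ satisfies $a\succeq_i c$ and $c\succeq_j b$; the matching uncovered set is the set of $a$ such that $G(a,b)$ has a perfect matching for all $b$. *)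

theory Defs
  imports Complex_Main "HOL-Library.Extended_Real"
begin

text \<open>A profile is a list of rankings;
voter i (for i < length P) has ranking P ! i, a list of all candidates
without repetition, most preferred first.  Points of the metric space are
Inl i (voter i) and Inr c (candidate c).\<close>

definition ranking :: "'c::finite list \<Rightarrow> bool" where
  "ranking r \<longleftrightarrow> distinct r \<and> set r = UNIV"

definition profile :: "'c::finite list list \<Rightarrow> bool" where
  "profile P \<longleftrightarrow> (\<forall>r \<in> set P. ranking r)"

definition voters :: "'c list list \<Rightarrow> nat set" where
  "voters P = {..<length P}"

definition prefers :: "'c list list \<Rightarrow> nat \<Rightarrow> 'c \<Rightarrow> 'c \<Rightarrow> bool" where
  "prefers P i a b \<longleftrightarrow> (\<exists>xs ys. P ! i = xs @ a # ys \<and> b \<in> set ys)"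

definition weakly_prefers :: "'c list list \<Rightarrow> nat \<Rightarrow> 'c \<Rightarrow> 'c \<Rightarrow> bool" where
  "weakly_prefers P i a b \<longleftrightarrow> a = b \<or> prefers P i a b"

definition top :: "'c list list \<Rightarrow> nat \<Rightarrow> 'c" where
  "top P i = hd (P ! i)"

definition distance_function :: "'c list list \<Rightarrow> (nat + 'c \<Rightarrow> nat + 'c \<Rightarrow> real) \<Rightarrow> bool" where
  "distance_function P d \<longleftrightarrow>
     (let Pts = Inl ` voters P \<union> range Inr in
       (\<forall>x\<in>Pts. d x x = 0) \<and>
       (\<forall>x\<in>Pts. \<forall>y\<in>Pts. 0 \<le> d x y \<and> d x y = d y x) \<and>
       (\<forall>x\<in>Pts. \<forall>y\<in>Pts. \<forall>z\<in>Pts. d x z \<le> d x y + d y z))"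

definition consistent :: "'c list list \<Rightarrow> (nat + 'c \<Rightarrow> nat + 'c \<Rightarrow> real) \<Rightarrow> bool" where
  "consistent P d \<longleftrightarrow>
     (\<forall>i\<in>voters P. \<forall>c c'. prefers P i c c' \<longrightarrow> d (Inl i) (Inr c) \<le> d (Inl i) (Inr c'))"

definition decisive :: "real \<Rightarrow> 'c list list \<Rightarrow> (nat + 'c \<Rightarrow> nat + 'c \<Rightarrow> real) \<Rightarrow> bool" where
  "decisive \<alpha> P d \<longleftrightarrow>
     (\<forall>i\<in>voters P. \<forall>c. c \<noteq> top P i \<longrightarrow>
        d (Inl i) (Inr (top P i)) \<le> \<alpha> * d (Inl i) (Inr c))"

definition SC :: "'c list list \<Rightarrow> (nat + 'c \<Rightarrow> nat + 'c \<Rightarrow> real) \<Rightarrow> 'c \<Rightarrow> real" where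
  "SC P d c = (\<Sum>i\<in>voters P. d (Inl i) (Inr c))"

definition opt_SC :: "'c::finite list list \<Rightarrow> (nat + 'c \<Rightarrow> nat + 'c \<Rightarrow> real) \<Rightarrow> real" where
  "opt_SC P d = Min (range (SC P d))"

text \<open>Instances with optimal social
  cost 0 are excluded (a lower bound on this quantity is only stronger).\<close>
definition distortion :: "real \<Rightarrow> ('c::finite list list \<Rightarrow> 'c set) \<Rightarrow> ereal" where
  "distortion \<alpha> S = Sup {ereal (SC P d c / opt_SC P d) | P d c.
      profile P \<and> distance_function P d \<and> consistent P d \<and> decisive \<alpha> P d \<and>
      opt_SC P d > 0 \<and> c \<in> S P}"

definition condorcet_winner :: "'c list list \<Rightarrow> 'c \<Rightarrow> bool" where
  "condorcet_winner P a \<longleftrightarrow>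
     (\<forall>b. b \<noteq> a \<longrightarrow> real (card {i\<in>voters P. prefers P i a b}) \<ge> real (length P) / 2)"

definition condorcet_consistent :: "('c::finite list list \<Rightarrow> 'c) \<Rightarrow> bool" where
  "condorcet_consistent f \<longleftrightarrow>
     (\<forall>P. profile P \<and> (\<exists>a. condorcet_winner P a) \<longrightarrow> condorcet_winner P (f P))"

definition sep_edge :: "'c list list \<Rightarrow> 'c \<Rightarrow> 'c \<Rightarrow> nat \<Rightarrow> nat \<Rightarrow> bool" where
  "sep_edge P a b i j \<longleftrightarrow> (\<exists>c. weakly_prefers P i a c \<and> weakly_prefers P j c b)"

definition has_perfect_matching :: "'c list list \<Rightarrow> 'c \<Rightarrow> 'c \<Rightarrow> bool" where
  "has_perfect_matching P a b \<longleftrightarrow>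
     (\<exists>\<pi>. bij_betw \<pi> (voters P) (voters P) \<and> (\<forall>i\<in>voters P. sep_edge P a b i (\<pi> i)))"

definition matching_uncovered_set :: "'c list list \<Rightarrow> 'c set" where
  "matching_uncovered_set P = {a. \<forall>b. has_perfect_matching P a b}"

end

theory Submission
  imports Defs
begin


definition pref :: "'c list \<Rightarrow> 'c \<Rightarrow> 'c \<Rightarrow> bool" where
  "pref r a b \<longleftrightarrow> (\<exists>xs ys. r = xs @ a # ys \<and> b \<in> set ys)"

lemma prefers_pref: "prefers P i a b = pref (P ! i) a b"
  by (simp add: prefers_def pref_def)

definition idx :: "'c list \<Rightarrow> 'c \<Rightarrow> nat" where
  "idx r y = length (takeWhile (\<lambda>z. z \<noteq> y) r)"

lemma pref_idx:
  assumes "distinct r" "pref r a b" shows "idx r a < idx r b"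
proof -
  obtain xs ys where r: "r = xs @ a # ys" and b: "b \<in> set ys" using assms(2) by (auto simp: pref_def)
  have "a \<notin> set xs" "b \<notin> set xs" "b \<noteq> a" using assms(1) b r by auto
  have "takeWhile (\<lambda>z. z \<noteq> a) (xs @ a # ys) = xs"
    using \<open>a \<notin> set xs\<close> by (subst takeWhile_append2) auto
  moreover have "takeWhile (\<lambda>z. z \<noteq> b) (xs @ a # ys) = xs @ a # takeWhile (\<lambda>z. z \<noteq> b) ys"
    using \<open>b \<notin> set xs\<close> \<open>b \<noteq> a\<close> by (subst takeWhile_append2) auto
  ultimately show ?thesis unfolding idx_def r by simp
qed

lemma pref_asym: "distinct r \<Longrightarrow> pref r a b \<Longrightarrow> \<not> pref r b a"
  using pref_idx[of r a b] pref_idx[of r b a] by auto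

lemma pref_sorted:
  assumes "sorted (map g r)" "pref r a b" shows "g a \<le> g b"
proof -
  obtain xs ys where r: "r = xs @ a # ys" and b: "b \<in> set ys" using assms(2) by (auto simp: pref_def)
  show ?thesis using assms(1) b unfolding r by (auto simp: sorted_append)
qed

lemma pref_intro: "b \<in> set ys \<Longrightarrow> pref (xs @ a # ys) a b"
  by (auto simp: pref_def)

lemma pref_intro1: "b \<in> set ys \<Longrightarrow> pref (a # ys) a b"
  using pref_intro[of b ys "[]"] by simp

lemma pref_intro2: "b \<in> set ys \<Longrightarrow> pref (c # a # ys) a b"
  using pref_intro[of b ys "[c]"] by simp

lemma map_const_replicate: "(\<forall>c\<in>set os. g c = K) \<Longrightarrow> map g os = replicate (length os) K"
  by (induction os) auto

lemma sep_matching: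
  fixes V A :: "nat set"
  assumes "finite V" "A \<subseteq> V" "card (V - A) \<le> card A"
  shows "\<exists>\<pi>. bij_betw \<pi> V V \<and> (\<forall>i\<in>V. i \<in> A \<or> \<pi> i \<in> A)"
proof -
  obtain A' where A': "A' \<subseteq> A" "card A' = card (V - A)"
    using assms(3) obtain_subset_with_card_n by metis
  have fin: "finite A'" "finite (V - A)" using A' assms by (auto intro: finite_subset)
  obtain h where h: "bij_betw h (V - A) A'"
    using finite_same_card_bij[OF fin(2) fin(1)] A' by metis
  define \<pi> where "\<pi> i = (if i \<in> V - A then h i else if i \<in> A' then inv_into (V - A) h i else i)" for i
  have "\<And>i. i \<in> V - A \<Longrightarrow> \<pi> i = h i" by (simp add: \<pi>_def)
  then have b1: "bij_betw \<pi> (V - A) A'" using h bij_betw_cong[of "V - A" \<pi> h A'] by simp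
  have b2: "bij_betw \<pi> A' (V - A)"
  proof -
    have "bij_betw (inv_into (V - A) h) A' (V - A)" using h by (rule bij_betw_inv_into)
    moreover have "\<And>i. i \<in> A' \<Longrightarrow> \<pi> i = inv_into (V - A) h i" using A' by (auto simp: \<pi>_def)
    ultimately show ?thesis using bij_betw_cong[of "A'" \<pi> "inv_into (V - A) h" "V - A"] by simp
  qed
  have "bij_betw id (A - A') (A - A')" by simp
  moreover have "\<And>i. i \<in> A - A' \<Longrightarrow> \<pi> i = id i" using assms(2) by (auto simp: \<pi>_def)
  ultimately have b3: "bij_betw \<pi> (A - A') (A - A')" using bij_betw_cong[of "A - A'" \<pi> id "A - A'"] by simp
  have b12: "bij_betw \<pi> ((V - A) \<union> A') (A' \<union> (V - A))"
    by (rule bij_betw_combine[OF b1 b2]) (use A' in blast)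
  have "bij_betw \<pi> ((V - A) \<union> A' \<union> (A - A')) (A' \<union> (V - A) \<union> (A - A'))"
    by (rule bij_betw_combine[OF b12 b3]) (use A' in blast)
  moreover have "(V - A) \<union> A' \<union> (A - A') = V" "A' \<union> (V - A) \<union> (A - A') = V" using A' assms by auto
  ultimately have "bij_betw \<pi> V V" by simp
  moreover have "\<forall>i\<in>V. i \<in> A \<or> \<pi> i \<in> A"
  proof
    fix i assume "i \<in> V"
    show "i \<in> A \<or> \<pi> i \<in> A"
    proof (cases "i \<in> A")
      case False
      then have "\<pi> i \<in> A'" using b1 \<open>i \<in> V\<close> by (auto simp: bij_betw_def)
      then show ?thesis using A' by blast
    qed simp
  qed
  ultimately show ?thesis by blast
qed



lemma cw_in_mus:
  assumes "condorcet_winner P a"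
  shows "a \<in> matching_uncovered_set P"
  unfolding matching_uncovered_set_def
proof (intro CollectI allI)
  fix b
  show "has_perfect_matching P a b"
  proof (cases "b = a")
    case True
    have "\<forall>i\<in>voters P. sep_edge P a b i (id i)"
      using True by (auto simp: sep_edge_def weakly_prefers_def)
    then show ?thesis unfolding has_perfect_matching_def by (metis bij_betw_id)
  next
    case False
    define A where "A = {i\<in>voters P. prefers P i a b}"
    have fin: "finite (voters P)" by (simp add: voters_def)
    have AV: "A \<subseteq> voters P" by (auto simp: A_def)
    have cA: "real (card A) \<ge> real (length P) / 2" using assms False by (auto simp: condorcet_winner_def A_def)
    have "card (voters P - A) = length P - card A" using AV fin by (simp add: card_Diff_subset voters_def finite_subset)
    then have "card (voters P - A) \<le> card A" using cA by linarith
    then obtain \<pi> where pi: "bij_betw \<pi> (voters P) (voters P)" "\<forall>i\<in>voters P. i \<in> A \<or> \<pi> i \<in> A"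
      using sep_matching[OF fin AV] by blast
    have "\<forall>i\<in>voters P. sep_edge P a b i (\<pi> i)"
    proof
      fix i assume "i \<in> voters P"
      then consider "i \<in> A" | "\<pi> i \<in> A" using pi by blast
      then show "sep_edge P a b i (\<pi> i)"
      proof cases
        case 1 then show ?thesis unfolding sep_edge_def weakly_prefers_def A_def by blast
      next
        case 2 then show ?thesis unfolding sep_edge_def weakly_prefers_def A_def by blast
      qed
    qed
    then show ?thesis using pi unfolding has_perfect_matching_def by blast
  qed
qed

lemma opt_pos:
  fixes P :: "'c::finite list list"
  assumes "\<And>c. SC P d c > 0"
  shows "opt_SC P d > 0"
proof -
  have "opt_SC P d \<in> range (SC P d)" unfolding opt_SC_def by (rule Min_in) auto
  then show ?thesis using assms by auto
qed

lemma opt_le: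
  fixes P :: "'c::finite list list"
  shows "opt_SC P d \<le> SC P d c"
  unfolding opt_SC_def by (rule Min_le) auto

lemma ratio_ge:
  fixes P :: "'c::finite list list"
  assumes "\<And>c. SC P d c > 0"
  shows "SC P d w / SC P d x \<le> SC P d w / opt_SC P d"
  using opt_pos[OF assms] opt_le[of P d x] assms[of w]
  by (intro divide_left_mono) auto

lemma dist_le:
  assumes "profile P" "distance_function P d" "consistent P d" "decisive \<alpha> P d" "opt_SC P d > 0"
    "c \<in> S P" "B \<le> SC P d c / opt_SC P d"
  shows "ereal B \<le> distortion \<alpha> S"
proof -
  have "ereal (SC P d c / opt_SC P d) \<le> distortion \<alpha> S"
    unfolding distortion_def by (rule Sup_upper) (use assms in blast)
  then show ?thesis using assms(7) by (meson ereal_less_eq(3) order_trans)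
qed

lemma triangle_12:
  fixes dd :: "'c \<Rightarrow> 'c \<Rightarrow> real"
  assumes "\<And>a. dd a a = 0" "\<And>a b. a \<noteq> b \<Longrightarrow> 1 \<le> dd a b \<and> dd a b \<le> 2"
  shows "dd a c \<le> dd a b + dd b c"
  using assms(2)[of a b] assms(2)[of b c] assms(2)[of a c] assms(1)[of a] assms(1)[of b]
  by (cases "a = b"; cases "b = c"; cases "a = c") auto



lemma line_metric: "distance_function P (\<lambda>u v. \<bar>pos u - pos v\<bar> :: real)"
  unfolding distance_function_def Let_def by auto

lemma sorted3: "p \<le> q \<Longrightarrow> q \<le> K \<Longrightarrow> sorted (p # q # replicate n K)"
  by (induction n) auto

lemma inst_T_metric:
  fixes w x :: "'c::finite" and \<alpha> :: real
  assumes cs: "distinct (w # x # os)" "set (w # x # os) = UNIV" and al: "0 \<le> \<alpha>" "\<alpha> \<le> 1"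
    and P: "P = [w#x#os, x#w#os] \<or> P = [x#w#os, w#x#os]"
  shows "\<exists>d. distance_function P d \<and> consistent P d \<and> decisive \<alpha> P d \<and> opt_SC P d > 0
           \<and> 1 + 2 * \<alpha> \<le> SC P d w / opt_SC P d"
proof -
  define pos :: "nat + 'c \<Rightarrow> real" where
    "pos u = (case u of Inl i \<Rightarrow> (if hd (P ! i) = w then \<alpha> else 1 + \<alpha>)
                      | Inr c \<Rightarrow> (if c = w then 0 else if c = x then 1 + \<alpha> else 10))" for u
  define d where "d u v = \<bar>pos u - pos v\<bar>" for u v
  have wx: "w \<noteq> x" using cs(1) by simp
  have osn: "c \<in> set os \<Longrightarrow> c \<noteq> w \<and> c \<noteq> x" for c using cs(1) by auto
  have pw: "pos (Inr w) = 0" by (simp add: pos_def)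
  have px: "pos (Inr x) = 1 + \<alpha>" using wx by (simp add: pos_def)
  have po: "pos (Inr c) = 10" if "c \<in> set os" for c using osn[OF that] by (simp add: pos_def)
  have pl1: "pos (Inl i) = \<alpha>" if "P ! i = w#x#os" for i using that by (simp add: pos_def)
  have pl2: "pos (Inl i) = 1 + \<alpha>" if "P ! i = x#w#os" for i using that wx by (simp add: pos_def)
  have "length P = 2" using P by (elim disjE) simp_all
  then have vP: "voters P = {0, 1}" by (auto simp: voters_def)
  have P01: "(P ! 0 = w#x#os \<and> P ! 1 = x#w#os) \<or> (P ! 0 = x#w#os \<and> P ! 1 = w#x#os)"
    using P by (elim disjE) simp_all
  have Pi: "P ! i = w#x#os \<or> P ! i = x#w#os" if "i \<in> voters P" for i
  proof -
    have "i = 0 \<or> i = 1" using that vP by blast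
    then show ?thesis using P01 by blast
  qed
  have df: "distance_function P d"
    unfolding d_def[abs_def] by (rule line_metric)
  have srt: "sorted (map (\<lambda>c. d (Inl i) (Inr c)) (P ! i))" if "i \<in> voters P" for i
  proof -
    have "P ! i = w#x#os \<or> P ! i = x#w#os" using Pi that .
    then show ?thesis
    proof
      assume e: "P ! i = w#x#os"
      have "map (\<lambda>c. d (Inl i) (Inr c)) os = replicate (length os) (10 - \<alpha>)"
        apply (rule map_const_replicate)
        using po pl1[OF e] al unfolding d_def by auto
      moreover have "d (Inl i) (Inr w) = \<alpha>" "d (Inl i) (Inr x) = 1"
        using pl1[OF e] pw px al unfolding d_def by auto
      ultimately show ?thesis unfolding e using al by (simp add: sorted3 del: sorted_simps)
    next
      assume e: "P ! i = x#w#os"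
      have "map (\<lambda>c. d (Inl i) (Inr c)) os = replicate (length os) (9 - \<alpha>)"
        apply (rule map_const_replicate)
        using po pl2[OF e] al unfolding d_def by auto
      moreover have "d (Inl i) (Inr x) = 0" "d (Inl i) (Inr w) = 1 + \<alpha>"
        using pl2[OF e] pw px al unfolding d_def by auto
      ultimately show ?thesis unfolding e using al by (simp add: sorted3 del: sorted_simps)
    qed
  qed
  have co: "consistent P d"
    unfolding consistent_def prefers_pref
  proof (intro ballI allI impI)
    fix i c c' assume "i \<in> voters P" "pref (P ! i) c c'"
    then show "d (Inl i) (Inr c) \<le> d (Inl i) (Inr c')"
      using pref_sorted[OF srt] by blast
  qed
  have de: "decisive \<alpha> P d"
    unfolding decisive_def
  proof (intro ballI allI impI)
    fix i c assume i: "i \<in> voters P" and c: "c \<noteq> top P i"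
    have "P ! i = w#x#os \<or> P ! i = x#w#os" using Pi i .
    then show "d (Inl i) (Inr (top P i)) \<le> \<alpha> * d (Inl i) (Inr c)"
    proof
      assume e: "P ! i = w#x#os"
      have t: "top P i = w" by (simp add: top_def e)
      have "c = x \<or> c \<in> set os" using c t cs(2) by auto
      then have c1: "1 \<le> d (Inl i) (Inr c)"
        using po pl1[OF e] px al unfolding d_def by auto
      have "d (Inl i) (Inr (top P i)) = \<alpha>" using al pl1[OF e] pw t by (simp add: d_def)
      then show ?thesis using mult_left_mono[OF c1 al(1)] by simp
    next
      assume e: "P ! i = x#w#os"
      have t: "top P i = x" by (simp add: top_def e)
      have "d (Inl i) (Inr (top P i)) = 0" using pl2[OF e] px t by (simp add: d_def)
      then show ?thesis using al by (simp add: d_def)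
    qed
  qed
  have SCs: "SC P d c = d (Inl 0) (Inr c) + d (Inl 1) (Inr c)" for c
    unfolding SC_def vP by simp
  have SCw: "SC P d w = 1 + 2 * \<alpha>"
    using P01 pl1 pl2 pw al unfolding SCs d_def by auto
  have SCx: "SC P d x = 1"
    using P01 pl1 pl2 px al unfolding SCs d_def by auto
  have SCpos: "SC P d c > 0" for c
  proof -
    have "c = w \<or> c = x \<or> c \<in> set os" using cs(2) by auto
    moreover have "SC P d c > 0" if "c \<in> set os"
      using P01 pl1 pl2 po[OF that] al unfolding SCs d_def by auto
    ultimately show ?thesis using SCw SCx al by auto
  qed
  have "1 + 2 * \<alpha> \<le> SC P d w / opt_SC P d"
    using ratio_ge[of P d w x, OF SCpos] SCw SCx by simp
  then show ?thesis using df co de opt_pos[of P d, OF SCpos] by blast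
qed



lemma loc_metric:
  fixes dd :: "'c \<Rightarrow> 'c \<Rightarrow> real"
  assumes "\<And>a. dd a a = 0" "\<And>a b. a \<noteq> b \<Longrightarrow> 1 \<le> dd a b \<and> dd a b \<le> 2" "\<And>a b. dd a b = dd b a"
  shows "distance_function P (\<lambda>u v. dd (lc u) (lc v))"
proof -
  have nn: "0 \<le> dd a b" for a b using assms(1)[of a] assms(2)[of a b] by (cases "a = b") auto
  show ?thesis unfolding distance_function_def Let_def
    using assms(1,3) nn triangle_12[of dd, OF assms(1,2)] by blast
qed

definition Sprof :: "'c \<Rightarrow> 'c \<Rightarrow> 'c list \<Rightarrow> 'c list list" where
  "Sprof w x os = map (\<lambda>c. c # w # x # remove1 c os) os @ replicate (length os - 2) (x # os @ [w])"

context
  fixes w x :: "'c::finite" and os :: "'c list" and k :: nat and P :: "'c list list"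
  assumes cs: "distinct (w # x # os)" "set (w # x # os) = UNIV"
    and k: "length os = k" "k \<ge> 3"
    and P: "P = Sprof w x os"
begin

lemma lenP: "length P = 2 * k - 2"
  using k by (simp add: P Sprof_def)

lemma Pc: "i < k \<Longrightarrow> P ! i = os ! i # w # x # remove1 (os ! i) os"
  using k by (simp add: P Sprof_def nth_append)

lemma Px: "k \<le> i \<Longrightarrow> i < 2 * k - 2 \<Longrightarrow> P ! i = x # os @ [w]"
  using k by (simp add: P Sprof_def nth_append)

lemma osn: "c \<in> set os \<Longrightarrow> c \<noteq> w \<and> c \<noteq> x"
  using cs(1) by auto

lemma wx: "w \<noteq> x" using cs(1) by simp

lemma dos: "distinct os" using cs(1) by simp

lemma setrm: "set (remove1 c os) = set os - {c}"
  using dos by (simp add: set_remove1_eq)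

lemma osi: "i < k \<Longrightarrow> os ! i \<in> set os"
  using k by simp

lemma allc: "c = w \<or> c = x \<or> c \<in> set os"
  using cs(2) by auto

lemma distP: "i < length P \<Longrightarrow> distinct (P ! i)"
proof -
  assume i: "i < length P"
  show ?thesis
  proof (cases "i < k")
    case True
    have "os ! i \<notin> set (remove1 (os ! i) os)" using setrm by simp
    then show ?thesis using True Pc cs(1) osn[OF osi[OF True]] dos by simp
  next
    case False
    then show ?thesis using i lenP Px cs(1) by auto
  qed
qed

lemma profP: "profile P"
  unfolding profile_def ranking_def
proof
  fix r assume "r \<in> set P"
  then obtain i where i: "i < length P" "r = P ! i" by (auto simp: in_set_conv_nth)
  have "set r = UNIV"
  proof (cases "i < k")
    case True
    then have "set r = {os ! i, w, x} \<union> (set os - {os ! i})" using i Pc setrm by auto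
    also have "\<dots> = set (w # x # os)" using osi[OF True] by auto
    finally show ?thesis using cs(2) by simp
  next
    case False
    then show ?thesis using i lenP Px cs(2) by auto
  qed
  then show "distinct r \<and> set r = UNIV" using distP i by simp
qed

lemma card_eq1: "card {i. i < k \<and> os ! i = b} \<le> 1"
proof -
  have "finite {i. i < k \<and> os ! i = b}" by simp
  moreover have "\<forall>a1\<in>{i. i < k \<and> os ! i = b}. \<forall>a2\<in>{i. i < k \<and> os ! i = b}. a1 = a2"
    using dos k(1) nth_eq_iff_index_eq by fastforce
  ultimately show ?thesis using card_le_Suc0_iff_eq by (metis One_nat_def)
qed

lemma card_neq: "card {i. i < k \<and> os ! i \<noteq> b} \<ge> k - 1"
proof -
  have "{..<k} = {i. i < k \<and> os ! i \<noteq> b} \<union> {i. i < k \<and> os ! i = b}" by auto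
  then have "k \<le> card {i. i < k \<and> os ! i \<noteq> b} + card {i. i < k \<and> os ! i = b}"
    by (metis card_Un_le card_lessThan)
  then show ?thesis using card_eq1[of b] by linarith
qed

lemma vP: "voters P = {..<2 * k - 2}" by (simp add: voters_def lenP)

lemma cw_w: "condorcet_winner P w"
  unfolding condorcet_winner_def
proof (intro allI impI)
  fix b assume b: "b \<noteq> w"
  have sub: "{i. i < k \<and> os ! i \<noteq> b} \<subseteq> {i \<in> voters P. prefers P i w b}"
  proof
    fix i assume "i \<in> {i. i < k \<and> os ! i \<noteq> b}"
    then have i: "i < k" "os ! i \<noteq> b" by auto
    have "b \<in> set (x # remove1 (os ! i) os)" using allc[of b] b i setrm by auto
    then have "pref (P ! i) w b" unfolding Pc[OF i(1)] by (rule pref_intro2)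
    then show "i \<in> {i \<in> voters P. prefers P i w b}" using i k vP by (simp add: prefers_pref)
  qed
  have "card {i. i < k \<and> os ! i \<noteq> b} \<le> card {i \<in> voters P. prefers P i w b}"
    by (rule card_mono[OF _ sub]) (simp add: voters_def)
  then have "k - 1 \<le> card {i \<in> voters P. prefers P i w b}" using card_neq[of b] by linarith
  then have "real k - 1 \<le> real (card {i \<in> voters P. prefers P i w b})" using k by linarith
  moreover have "real (length P) / 2 = real k - 1" using lenP k by simp
  ultimately show "real (length P) / 2 \<le> real (card {i \<in> voters P. prefers P i w b})" by simp
qed

lemma cw_unique: "condorcet_winner P y \<Longrightarrow> y = w"
proof (rule ccontr)
  assume cy: "condorcet_winner P y" and yw: "y \<noteq> w"
  have half: "real (length P) / 2 = real k - 1" using lenP k by simp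
  show False
  proof (cases "y = x")
    case True
    have sub: "{i \<in> voters P. prefers P i y w} \<subseteq> {k..<2 * k - 2}"
    proof
      fix i assume "i \<in> {i \<in> voters P. prefers P i y w}"
      then have i: "i < 2 * k - 2" "pref (P ! i) x w" using True vP by (auto simp: prefers_pref)
      have "\<not> i < k"
      proof
        assume ik: "i < k"
        have "pref (P ! i) w x" unfolding Pc[OF ik] by (rule pref_intro2) simp
        then show False using pref_asym[OF distP] i lenP by auto
      qed
      then show "i \<in> {k..<2 * k - 2}" using i by simp
    qed
    have "card {i \<in> voters P. prefers P i y w} \<le> k - 2"
      using card_mono[OF _ sub] by simp
    moreover have "real (length P) / 2 \<le> real (card {i \<in> voters P. prefers P i y w})"
      using cy yw unfolding condorcet_winner_def by auto
    ultimately show False using half k by linarith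
  next
    case False
    then have yo: "y \<in> set os" using allc[of y] yw by simp
    have sub: "{i \<in> voters P. prefers P i y x} \<subseteq> {i. i < k \<and> os ! i = y}"
    proof
      fix i assume "i \<in> {i \<in> voters P. prefers P i y x}"
      then have i: "i < 2 * k - 2" "pref (P ! i) y x" using vP by (auto simp: prefers_pref)
      have "i < k \<and> os ! i = y"
      proof (rule ccontr)
        assume "\<not> (i < k \<and> os ! i = y)"
        then consider "i < k" "os ! i \<noteq> y" | "k \<le> i" by linarith
        then have "pref (P ! i) x y"
        proof cases
          case 1
          have "y \<in> set (remove1 (os ! i) os)" using setrm yo 1 by auto
          then show ?thesis unfolding Pc[OF 1(1)] using pref_intro[of y _ "[os ! i, w]" x] by simp
        next
          case 2
          show ?thesis unfolding Px[OF 2 i(1)] by (rule pref_intro1) (use yo in simp)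
        qed
        then show False using pref_asym[OF distP] i lenP by auto
      qed
      then show "i \<in> {i. i < k \<and> os ! i = y}" by simp
    qed
    have "card {i \<in> voters P. prefers P i y x} \<le> 1"
      using card_mono[OF _ sub] card_eq1[of y] by simp
    moreover have "real (length P) / 2 \<le> real (card {i \<in> voters P. prefers P i y x})"
      using cy False unfolding condorcet_winner_def by auto
    ultimately show False using half k by linarith
  qed
qed

end


context
  fixes w x :: "'c::finite" and os :: "'c list" and k :: nat and P :: "'c list list"
  assumes cs: "distinct (w # x # os)" "set (w # x # os) = UNIV"
    and k: "length os = k" "k \<ge> 3"
    and P: "P = Sprof w x os"
begin

lemma S_metric:
  fixes \<alpha> :: real assumes al: "0 \<le> \<alpha>"
  shows "\<exists>d. distance_function P d \<and> consistent P d \<and> decisive \<alpha> P d \<and> opt_SC P d > 0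
           \<and> (3 * real k - 4) / real k \<le> SC P d w / opt_SC P d"
proof -
  note lenP = lenP[OF cs k P] and Pc = Pc[OF cs k P] and Px = Px[OF cs k P] and osn = osn[OF cs k P]
    and wx = wx[OF cs k P] and setrm = setrm[OF cs k P] and osi = osi[OF cs k P]
    and allc = allc[OF cs k P] and vP = vP[OF cs k P]
  define dd :: "'c \<Rightarrow> 'c \<Rightarrow> real" where
    "dd a b = (if a = b then 0 else if (a = w \<and> b = x) \<or> (a = x \<and> b = w) then 2
               else if a = w \<or> a = x \<or> b = w \<or> b = x then 1 else 2)" for a b
  define lc :: "nat + 'c \<Rightarrow> 'c" where "lc u = (case u of Inl i \<Rightarrow> hd (P ! i) | Inr c \<Rightarrow> c)" for u
  define d where "d u v = dd (lc u) (lc v)" for u v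
  have dd0: "dd a a = 0" for a by (simp add: dd_def)
  have dd12: "a \<noteq> b \<Longrightarrow> 1 \<le> dd a b \<and> dd a b \<le> 2" for a b by (simp add: dd_def)
  have ddsym: "dd a b = dd b a" for a b by (auto simp: dd_def)
  have ddnn: "0 \<le> dd a b" for a b using dd0[of a] dd12[of a b] by (cases "a = b") auto
  have dli: "d (Inl i) (Inr c) = dd (hd (P ! i)) c" for i c by (simp add: d_def lc_def)
  have df: "distance_function P d"
    unfolding d_def[abs_def] by (rule loc_metric[OF dd0 dd12 ddsym])
  have srt: "sorted (map (\<lambda>c. d (Inl i) (Inr c)) (P ! i))" if "i \<in> voters P" for i
  proof (cases "i < k")
    case True
    let ?c = "os ! i"
    have cn: "?c \<noteq> w" "?c \<noteq> x" using osn[OF osi[OF True]] by auto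
    have "map (dd ?c) (remove1 ?c os) = replicate (length (remove1 ?c os)) 2"
      by (rule map_const_replicate) (use setrm osn cn in \<open>auto simp: dd_def\<close>)
    moreover have "dd ?c ?c = 0" "dd ?c w = 1" "dd ?c x = 1" using cn by (auto simp: dd_def)
    ultimately show ?thesis unfolding dli Pc[OF True] by simp
  next
    case False
    then have i: "k \<le> i" "i < 2 * k - 2" using that vP by auto
    have "map (dd x) os = replicate (length os) 1"
      by (rule map_const_replicate) (use osn in \<open>auto simp: dd_def\<close>)
    moreover have "dd x x = 0" "dd x w = 2" using wx by (auto simp: dd_def)
    ultimately show ?thesis unfolding dli Px[OF i] by (simp add: sorted_append)
  qed
  have co: "consistent P d"
    unfolding consistent_def prefers_pref
  proof (intro ballI allI impI)
    fix i c c' assume "i \<in> voters P" "pref (P ! i) c c'"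
    then show "d (Inl i) (Inr c) \<le> d (Inl i) (Inr c')"
      using pref_sorted[OF srt] by blast
  qed
  have de: "decisive \<alpha> P d"
    unfolding decisive_def top_def dli using dd0 ddnn al by simp
  have SCc: "SC P d c = (\<Sum>i<k. dd (os ! i) c) + (\<Sum>i\<in>{k..<2*k-2}. dd x c)" for c
  proof -
    have "SC P d c = (\<Sum>i\<in>{0..<2*k-2}. dd (hd (P ! i)) c)"
      unfolding SC_def vP dli by (simp add: lessThan_atLeast0)
    also have "\<dots> = (\<Sum>i\<in>{0..<k}. dd (hd (P ! i)) c) + (\<Sum>i\<in>{k..<2*k-2}. dd (hd (P ! i)) c)"
      using k by (intro sum.atLeastLessThan_concat[symmetric]) auto
    also have "(\<Sum>i\<in>{0..<k}. dd (hd (P ! i)) c) = (\<Sum>i<k. dd (os ! i) c)"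
      by (simp add: lessThan_atLeast0 Pc)
    also have "(\<Sum>i\<in>{k..<2*k-2}. dd (hd (P ! i)) c) = (\<Sum>i\<in>{k..<2*k-2}. dd x c)"
      by (intro sum.cong) (auto simp: Px)
    finally show ?thesis .
  qed
  have SCw: "SC P d w = 3 * real k - 4"
  proof -
    have "(\<Sum>i<k. dd (os ! i) w) = (\<Sum>i<k. 1)"
      by (intro sum.cong) (use osn osi in \<open>auto simp: dd_def\<close>)
    moreover have "dd x w = 2" using wx by (simp add: dd_def)
    ultimately show ?thesis unfolding SCc using k by simp
  qed
  have SCx: "SC P d x = real k"
  proof -
    have "(\<Sum>i<k. dd (os ! i) x) = (\<Sum>i<k. 1)"
      by (intro sum.cong) (use osn osi in \<open>auto simp: dd_def\<close>)
    then show ?thesis unfolding SCc using k dd0 by simp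
  qed
  have SCpos: "SC P d c > 0" for c
  proof (cases "c = x")
    case True then show ?thesis using SCx k by simp
  next
    case False
    have "dd x c \<le> (\<Sum>i\<in>{k..<2*k-2}. dd x c)"
      using k by (intro member_le_sum) (auto simp: ddnn)
    moreover have "0 \<le> (\<Sum>i<k. dd (os ! i) c)" by (intro sum_nonneg) (simp add: ddnn)
    moreover have "1 \<le> dd x c" using dd12 False by metis
    ultimately show ?thesis unfolding SCc by linarith
  qed
  have "(3 * real k - 4) / real k \<le> SC P d w / opt_SC P d"
    using ratio_ge[of P d w x, OF SCpos] SCw SCx by simp
  then show ?thesis using df co de opt_pos[of P d, OF SCpos] by blast
qed

end


lemma boundS:
  fixes k :: nat and \<alpha> :: real
  assumes "k \<ge> 3" "0 \<le> \<alpha>" "\<alpha> \<le> 1"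
  shows "3 - 4 * (3 + \<alpha>) / (real (k + 2) + 2 + real (k + 2) * \<alpha>) \<le> (3 * real k - 4) / real k"
proof -
  define D where "D = real (k + 2) + 2 + real (k + 2) * \<alpha>"
  have kp: "real k \<ge> 3" using assms by simp
  have Dp: "D > 0" unfolding D_def using assms by (simp add: add_pos_nonneg)
  have h: "D \<le> real k * (3 + \<alpha>)" unfolding D_def using assms kp by (simp add: algebra_simps)
  have "D * 4 \<le> real k * (12 + \<alpha> * 4)" using h by (simp add: algebra_simps)
  then have "4 / real k \<le> 4 * (3 + \<alpha>) / D" using Dp kp assms
    by (simp add: divide_simps mult.commute)
  moreover have "(3 * real k - 4) / real k = 3 - 4 / real k" using kp by (simp add: divide_simps)
  ultimately show ?thesis unfolding D_def by linarith
qed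

lemma boundT:
  fixes m :: nat and \<alpha> :: real
  assumes "m \<le> 4" "0 \<le> \<alpha>" "\<alpha> \<le> 1"
  shows "3 - 4 * (3 + \<alpha>) / (real m + 2 + real m * \<alpha>) \<le> 1 + 2 * \<alpha>"
proof -
  define D where "D = real m + 2 + real m * \<alpha>"
  have Dp: "D > 0" unfolding D_def using assms by (simp add: add_pos_nonneg)
  have D4: "D \<le> 6 + 4 * \<alpha>" unfolding D_def using assms
  proof -
    have "real m * (1 + \<alpha>) \<le> 4 * (1 + \<alpha>)" using assms by (intro mult_right_mono) auto
    then show "real m + 2 + real m * \<alpha> \<le> 6 + 4 * \<alpha>" by (simp add: algebra_simps)
  qed
  have "(2 - 2 * \<alpha>) * D \<le> (2 - 2 * \<alpha>) * (6 + 4 * \<alpha>)" using D4 assms by (intro mult_left_mono) auto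
  also have "\<dots> \<le> 4 * (3 + \<alpha>)" using assms by (simp add: algebra_simps)
  finally have "2 - 2 * \<alpha> \<le> 4 * (3 + \<alpha>) / D" using Dp by (simp add: divide_simps)
  then show ?thesis unfolding D_def by linarith
qed



lemma instance_exists:
  fixes m :: nat and \<alpha> :: real
  assumes "card (UNIV :: 'c::finite set) = m" and "m \<ge> 2" and "0 \<le> \<alpha>" and "\<alpha> \<le> 1"
  shows "\<exists>P :: 'c list list. profile P \<and> (\<exists>a. condorcet_winner P a) \<and>
    (\<forall>w. condorcet_winner P w \<longrightarrow> (\<exists>d. distance_function P d \<and> consistent P d \<and> decisive \<alpha> P d
        \<and> opt_SC P d > 0 \<and> 3 - 4 * (3 + \<alpha>) / (real m + 2 + real m * \<alpha>) \<le> SC P d w / opt_SC P d))"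
proof -
  obtain cs :: "'c list" where cs: "distinct cs" "set cs = UNIV"
    using finite_distinct_list[OF finite_UNIV] by blast
  have "length cs = m" using cs assms(1) distinct_card by fastforce
  then obtain w x os where cse: "cs = w # x # os" using assms(2)
    by (metis Suc_le_length_iff numeral_2_eq_2)
  define k where "k = length os"
  have mk: "m = k + 2" using \<open>length cs = m\<close> cse k_def by simp
  have cs1: "distinct (w # x # os)" "set (w # x # os) = UNIV" using cs cse by auto
  show ?thesis
  proof (cases "k \<ge> 3")
    case True
    define P where "P = Sprof w x os"
    have kk: "length os = k" "k \<ge> 3" using k_def True by auto
    have "\<forall>y. condorcet_winner P y \<longrightarrow> (\<exists>d. distance_function P d \<and> consistent P d \<and> decisive \<alpha> P d
        \<and> opt_SC P d > 0 \<and> 3 - 4 * (3 + \<alpha>) / (real m + 2 + real m * \<alpha>) \<le> SC P d y / opt_SC P d)"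
    proof (intro allI impI)
      fix y assume "condorcet_winner P y"
      then have yw: "y = w" using cw_unique[OF cs1 kk P_def] by blast
      obtain d where d: "distance_function P d" "consistent P d" "decisive \<alpha> P d" "opt_SC P d > 0"
        "(3 * real k - 4) / real k \<le> SC P d w / opt_SC P d"
        using S_metric[OF cs1 kk P_def assms(3)] by blast
      have "3 - 4 * (3 + \<alpha>) / (real m + 2 + real m * \<alpha>) \<le> (3 * real k - 4) / real k"
        using boundS[OF kk(2) assms(3,4)] mk by simp
      then show "\<exists>d. distance_function P d \<and> consistent P d \<and> decisive \<alpha> P d
        \<and> opt_SC P d > 0 \<and> 3 - 4 * (3 + \<alpha>) / (real m + 2 + real m * \<alpha>) \<le> SC P d y / opt_SC P d"
        using d yw by (meson order_trans)
    qed
    then show ?thesis using profP[OF cs1 kk P_def] cw_w[OF cs1 kk P_def] by blast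
  next
    case False
    define P where "P = [w#x#os, x#w#os]"
    have wx: "w \<noteq> x" and wos: "w \<notin> set os" and xos: "x \<notin> set os" using cs1 by auto
    have vP: "voters P = {0, 1}" by (auto simp: voters_def P_def)
    have prof: "profile P" using cs1 by (auto simp: P_def profile_def ranking_def)
    have cw: "condorcet_winner P w"
      unfolding condorcet_winner_def
    proof (intro allI impI)
      fix b assume b: "b \<noteq> w"
      have "b \<in> set (x # os)" using cs1(2) b by auto
      then have "prefers P 0 w b" by (simp add: prefers_pref P_def pref_intro1)
      then have "0 \<in> {i \<in> voters P. prefers P i w b}" by (simp add: vP)
      then have ne: "{i \<in> voters P. prefers P i w b} \<noteq> {}" by blast
      have fin: "finite {i \<in> voters P. prefers P i w b}" by (simp add: voters_def)
      have "1 \<le> card {i \<in> voters P. prefers P i w b}"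
        using ne fin by (metis One_nat_def Suc_leI card_gt_0_iff)
      then show "real (length P) / 2 \<le> real (card {i \<in> voters P. prefers P i w b})"
        by (simp add: P_def)
    qed
    have wxy: "y = w \<or> y = x" if "condorcet_winner P y" for y
    proof (rule ccontr)
      assume "\<not> (y = w \<or> y = x)"
      then have yo: "y \<in> set os" "y \<noteq> w" using cs1(2) by auto
      have E: "{i \<in> voters P. prefers P i y w} = {}"
      proof -
        have d0: "distinct (P ! 0)" "distinct (P ! 1)" using cs1 by (auto simp: P_def)
        have "pref (P ! 0) w y" using yo by (simp add: P_def pref_intro1)
        moreover have "pref (P ! 1) w y" using yo by (simp add: P_def pref_intro2)
        ultimately have n0: "\<not> pref (P ! 0) y w" and n1: "\<not> pref (P ! 1) y w"
          using pref_asym[OF d0(1)] pref_asym[OF d0(2)] by auto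
        have "i \<in> voters P \<Longrightarrow> \<not> prefers P i y w" for i
          using n0 n1 unfolding vP prefers_pref by auto
        then show ?thesis by blast
      qed
      have "real (length P) / 2 \<le> real (card {i \<in> voters P. prefers P i y w})"
        using that yo(2) unfolding condorcet_winner_def by (metis (no_types, lifting))
      moreover have "length P = 2" by (simp add: P_def)
      ultimately show False unfolding E by simp
    qed
    have bT: "3 - 4 * (3 + \<alpha>) / (real m + 2 + real m * \<alpha>) \<le> 1 + 2 * \<alpha>"
    proof -
      have "m \<le> 4" using False mk by linarith
      then show ?thesis using boundT[OF _ assms(3,4)] by blast
    qed
    have "\<forall>y. condorcet_winner P y \<longrightarrow> (\<exists>d. distance_function P d \<and> consistent P d \<and> decisive \<alpha> P d
        \<and> opt_SC P d > 0 \<and> 3 - 4 * (3 + \<alpha>) / (real m + 2 + real m * \<alpha>) \<le> SC P d y / opt_SC P d)"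
    proof (intro allI impI)
      fix y assume "condorcet_winner P y"
      then consider "y = w" | "y = x" using wxy by blast
      then obtain d where d: "distance_function P d" "consistent P d" "decisive \<alpha> P d" "opt_SC P d > 0"
        "1 + 2 * \<alpha> \<le> SC P d y / opt_SC P d"
      proof cases
        case 1
        have Pd: "P = [w#x#os, x#w#os] \<or> P = [x#w#os, w#x#os]" by (simp add: P_def)
        obtain d where "distance_function P d \<and> consistent P d \<and> decisive \<alpha> P d \<and> opt_SC P d > 0
           \<and> 1 + 2 * \<alpha> \<le> SC P d w / opt_SC P d"
          using inst_T_metric[OF cs1 assms(3,4) Pd] by blast
        then show ?thesis using that 1 by blast
      next
        case 2
        have c2: "distinct (x # w # os)" "set (x # w # os) = UNIV" using cs1 by auto
        have Pd: "P = [x#w#os, w#x#os] \<or> P = [w#x#os, x#w#os]" by (simp add: P_def)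
        obtain d where "distance_function P d \<and> consistent P d \<and> decisive \<alpha> P d \<and> opt_SC P d > 0
           \<and> 1 + 2 * \<alpha> \<le> SC P d x / opt_SC P d"
          using inst_T_metric[OF c2 assms(3,4) Pd] by blast
        then show ?thesis using that 2 by blast
      qed
      then show "\<exists>d. distance_function P d \<and> consistent P d \<and> decisive \<alpha> P d
        \<and> opt_SC P d > 0 \<and> 3 - 4 * (3 + \<alpha>) / (real m + 2 + real m * \<alpha>) \<le> SC P d y / opt_SC P d"
        using bT by (meson order_trans)
    qed
    then show ?thesis using prof cw by blast
  qed
qed

theorem proposition3:
  fixes m :: nat and \<alpha> :: real
  assumes "card (UNIV :: 'c::finite set) = m" and "m \<ge> 2" and "0 \<le> \<alpha>" and "\<alpha> \<le> 1"
  shows "(\<forall>f :: 'c list list \<Rightarrow> 'c. condorcet_consistent f \<longrightarrow>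
            ereal (3 - 4 * (3 + \<alpha>) / (real m + 2 + real m * \<alpha>)) \<le> distortion \<alpha> (\<lambda>P. {f P}))
       \<and> ereal (3 - 4 * (3 + \<alpha>) / (real m + 2 + real m * \<alpha>))
            \<le> distortion \<alpha> (matching_uncovered_set :: 'c list list \<Rightarrow> 'c set)"
proof -
  obtain P :: "'c list list" where P: "profile P" "\<exists>a. condorcet_winner P a"
    and H: "\<And>w. condorcet_winner P w \<Longrightarrow> (\<exists>d. distance_function P d \<and> consistent P d \<and> decisive \<alpha> P d
        \<and> opt_SC P d > 0 \<and> 3 - 4 * (3 + \<alpha>) / (real m + 2 + real m * \<alpha>) \<le> SC P d w / opt_SC P d)"
    using instance_exists[OF assms] by blast
  have part1: "\<forall>f :: 'c list list \<Rightarrow> 'c. condorcet_consistent f \<longrightarrow>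
            ereal (3 - 4 * (3 + \<alpha>) / (real m + 2 + real m * \<alpha>)) \<le> distortion \<alpha> (\<lambda>P. {f P})"
  proof (intro allI impI)
    fix f :: "'c list list \<Rightarrow> 'c" assume "condorcet_consistent f"
    then have "condorcet_winner P (f P)" using P unfolding condorcet_consistent_def by blast
    then obtain d where d: "distance_function P d" "consistent P d" "decisive \<alpha> P d" "opt_SC P d > 0"
        "3 - 4 * (3 + \<alpha>) / (real m + 2 + real m * \<alpha>) \<le> SC P d (f P) / opt_SC P d"
      using H by blast
    show "ereal (3 - 4 * (3 + \<alpha>) / (real m + 2 + real m * \<alpha>)) \<le> distortion \<alpha> (\<lambda>P. {f P})"
      by (rule dist_le[OF P(1) d(1-4) _ d(5)]) simp
  qed
  obtain a where a: "condorcet_winner P a" using P by blast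
  then obtain d where d: "distance_function P d" "consistent P d" "decisive \<alpha> P d" "opt_SC P d > 0"
      "3 - 4 * (3 + \<alpha>) / (real m + 2 + real m * \<alpha>) \<le> SC P d a / opt_SC P d"
    using H by blast
  have "ereal (3 - 4 * (3 + \<alpha>) / (real m + 2 + real m * \<alpha>))
            \<le> distortion \<alpha> (matching_uncovered_set :: 'c list list \<Rightarrow> 'c set)"
    using dist_le[where S = matching_uncovered_set and c = a, OF P(1) d(1-4) cw_in_mus[OF a] d(5)] .
  then show ?thesis using part1 by blast
qed

end
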